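(* Let $\Gamma$ be a finite undirected simple graph with vertices $x_1,\dots,x_n$ and edge set $E$, and let $G_\Gamma$ be the associated group with commutator generators $y_1,\dots,y_N$. For $d\in\{1,\dots,n-1\}$ let $V_d=\{x_i : \deg(x_i)\ge d\}$ and \[H_d=\Big\{\prod_{x_i\in V_d}x_i^{z_i}\prod_{l=1}^N y_l^{t_l}\ :\ z_i,t_l\in\mathbb{Z}\Big\}\subseteq G_\Gamma\] (products taken in increasing order of indices). Then for every $d\in\{1,\dots,n-1\}$, $H_d$ is a characteristic subgroup of $G_\Gamma$, i.e. $\varphi(H_d)=H_d$ for every automorphism $\varphi$ of $G_\Gamma$.
   Context: For a finite undirected simple graph $\Gamma$ with vertex set $\{x_1,\dots,x_n\}$ and edge set $E$, the group $G_\Gamma$ is defined by the presentation with generators $x_1,\dots,x_n$ and $y_{i,j}$ for each pair $i<j$ with $x_ix_j\notin E$, and relations $[x_j,x_i]=1$ if $x_ix_j\in E$; $[x_j,x_i]=y_{i,j}$ if $x_ix_j\notin E$ and $i<j$; and $[x_l,y_{i,j}]=1$ for all $l$ and all such $y_{i,j}$. Let $N$ be the number of pairs $i<j$ with $x_ix_j\notin E$, and enumerate the $y_{i,j}$ as $y_1,\dots,y_N$. Every element of $G_\Gamma$ is uniquely of the form $x_1^{z_1}\cdots x_n^{z_n}y_1^{t_1}\cdots y_N^{t_N}$. *)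

theory Defs
  imports "HOL-Algebra.Group"
begin

text \<open>Graph on vertices x_1..x_n (indices 1..n), edge relation E (symmetric, irreflexive).
  Non-edge pairs (i,j) with i<j index the central generators y_{i,j}.\<close>

definition nonedge :: "(nat \<Rightarrow> nat \<Rightarrow> bool) \<Rightarrow> nat \<Rightarrow> (nat \<times> nat) set" where
  "nonedge E n = {(i,j). 1 \<le> i \<and> i < j \<and> j \<le> n \<and> \<not> E i j}"

text \<open>An element x_1^{z_1}...x_n^{z_n} prod y_{i,j}^{t_{i,j}} is encoded by its normal form (z,t).\<close>

definition G_carrier :: "(nat \<Rightarrow> nat \<Rightarrow> bool) \<Rightarrow> nat \<Rightarrow> ((nat \<Rightarrow> int) \<times> (nat \<times> nat \<Rightarrow> int)) set" where
  "G_carrier E n = {(z,t). (\<forall>i. i \<notin> {1..n} \<longrightarrow> z i = 0) \<and> (\<forall>p. p \<notin> nonedge E n \<longrightarrow> t p = 0)}"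

text \<open>Multiplication of normal forms, using [x_j,x_i] = x_j^{-1} x_i^{-1} x_j x_i = y_{i,j} (i<j),
  i.e. x_j x_i = x_i x_j y_{i,j}, with y's central:
  (x^a Y)(x^b Y') = x^{a+b} Y Y' prod_{(k,j) non-edge, k<j} y_{k,j}^{a_j b_k}.\<close>

definition G_mult :: "(nat \<Rightarrow> nat \<Rightarrow> bool) \<Rightarrow> nat \<Rightarrow>
    ((nat \<Rightarrow> int) \<times> (nat \<times> nat \<Rightarrow> int)) \<Rightarrow> ((nat \<Rightarrow> int) \<times> (nat \<times> nat \<Rightarrow> int)) \<Rightarrow>
    ((nat \<Rightarrow> int) \<times> (nat \<times> nat \<Rightarrow> int))" where
  "G_mult E n g h =
     ((\<lambda>i. fst g i + fst h i),
      (\<lambda>(k,j). snd g (k,j) + snd h (k,j) +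
                (if (k,j) \<in> nonedge E n then fst g j * fst h k else 0)))"

definition G_Gamma :: "(nat \<Rightarrow> nat \<Rightarrow> bool) \<Rightarrow> nat \<Rightarrow> ((nat \<Rightarrow> int) \<times> (nat \<times> nat \<Rightarrow> int)) monoid" where
  "G_Gamma E n = \<lparr> carrier = G_carrier E n, mult = G_mult E n, one = ((\<lambda>_. 0), (\<lambda>_. 0)) \<rparr>"

definition vdeg :: "(nat \<Rightarrow> nat \<Rightarrow> bool) \<Rightarrow> nat \<Rightarrow> nat \<Rightarrow> nat" where
  "vdeg E n i = card {j \<in> {1..n}. E i j}"

definition V_d :: "(nat \<Rightarrow> nat \<Rightarrow> bool) \<Rightarrow> nat \<Rightarrow> nat \<Rightarrow> nat set" where
  "V_d E n d = {i \<in> {1..n}. d \<le> vdeg E n i}"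

definition H_d :: "(nat \<Rightarrow> nat \<Rightarrow> bool) \<Rightarrow> nat \<Rightarrow> nat \<Rightarrow> ((nat \<Rightarrow> int) \<times> (nat \<times> nat \<Rightarrow> int)) set" where
  "H_d E n d = {g \<in> G_carrier E n. \<forall>i. i \<notin> V_d E n d \<longrightarrow> fst g i = 0}"

end

theory Submission imports Complex_Main Defs "HOL-Library.Function_Algebras"
begin

lemma mult_G [simp]: "mult (G_Gamma E n) = G_mult E n" by (simp add: G_Gamma_def)
lemma carrier_G [simp]: "carrier (G_Gamma E n) = G_carrier E n" by (simp add: G_Gamma_def)
lemma one_G [simp]: "one (G_Gamma E n) = ((\<lambda>_. 0), (\<lambda>_. 0))" by (simp add: G_Gamma_def)

lemma fst_mult [simp]: "fst (G_mult E n g h) = (\<lambda>i. fst g i + fst h i)"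
  by (simp add: G_mult_def)
lemma snd_mult: "snd (G_mult E n g h) (k,j) = snd g (k,j) + snd h (k,j) +
                (if (k,j) \<in> nonedge E n then fst g j * fst h k else 0)"
  by (simp add: G_mult_def)

lemma G_group: "group (G_Gamma E n)"
proof (rule groupI)
  fix x y assume "x \<in> carrier (G_Gamma E n)" "y \<in> carrier (G_Gamma E n)"
  then show "x \<otimes>\<^bsub>G_Gamma E n\<^esub> y \<in> carrier (G_Gamma E n)"
    by (auto simp: G_carrier_def G_mult_def split: prod.splits)
next
  show "\<one>\<^bsub>G_Gamma E n\<^esub> \<in> carrier (G_Gamma E n)" by (simp add: G_carrier_def)
next
  fix x y z
  show "x \<otimes>\<^bsub>G_Gamma E n\<^esub> y \<otimes>\<^bsub>G_Gamma E n\<^esub> z = x \<otimes>\<^bsub>G_Gamma E n\<^esub> (y \<otimes>\<^bsub>G_Gamma E n\<^esub> z)"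
    by (auto simp: G_mult_def algebra_simps intro!: ext split: prod.splits)
next
  fix x assume "x \<in> carrier (G_Gamma E n)"
  then show "\<one>\<^bsub>G_Gamma E n\<^esub> \<otimes>\<^bsub>G_Gamma E n\<^esub> x = x"
    by (auto simp: G_carrier_def G_mult_def intro!: ext split: prod.splits)
next
  fix x assume x: "x \<in> carrier (G_Gamma E n)"
  obtain a t where xe: "x = (a,t)" by fastforce
  define y where "y = ((\<lambda>i. - a i), (\<lambda>(k,j). - t (k,j) + (if (k,j) \<in> nonedge E n then a j * a k else 0)))"
  have "y \<in> carrier (G_Gamma E n)" using x by (auto simp: G_carrier_def y_def xe)
  moreover have "y \<otimes>\<^bsub>G_Gamma E n\<^esub> x = \<one>\<^bsub>G_Gamma E n\<^esub>"
    by (auto simp: G_mult_def y_def xe intro!: ext split: prod.splits)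
  ultimately show "\<exists>y\<in>carrier (G_Gamma E n). y \<otimes>\<^bsub>G_Gamma E n\<^esub> x = \<one>\<^bsub>G_Gamma E n\<^esub>" by blast
qed


lemma sum_fun_apply: "(\<Sum>k\<in>A. (f k :: 'a \<Rightarrow> 'b::comm_monoid_add)) m = (\<Sum>k\<in>A. f k m)"
  by (induction A rule: infinite_finite_induct) auto

definition xg :: "nat \<Rightarrow> ((nat \<Rightarrow> int) \<times> (nat \<times> nat \<Rightarrow> int))" where
  "xg i = ((\<lambda>l. if l = i then 1 else 0), (\<lambda>_. 0))"

lemma finite_nonedge: "finite (nonedge E n)"
proof -
  have "nonedge E n \<subseteq> {1..n} \<times> {1..n}" by (auto simp: nonedge_def)
  then show ?thesis by (rule finite_subset) auto
qed

lemma carrier_snd: "g \<in> G_carrier E n \<Longrightarrow> q \<notin> nonedge E n \<Longrightarrow> snd g q = 0"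
  unfolding G_carrier_def mem_Collect_eq case_prod_beta by blast

lemma carrier_fst: "g \<in> G_carrier E n \<Longrightarrow> i \<notin> {1..n} \<Longrightarrow> fst g i = 0"
  unfolding G_carrier_def mem_Collect_eq case_prod_beta by blast

context
  fixes E :: "nat \<Rightarrow> nat \<Rightarrow> bool" and n :: nat
begin

interpretation grp: group "G_Gamma E n" by (rule G_group)

lemma xg_in: "i \<in> {1..n} \<Longrightarrow> xg i \<in> G_carrier E n"
  by (auto simp: xg_def G_carrier_def)

lemma fst_inv: "g \<in> G_carrier E n \<Longrightarrow> fst (inv\<^bsub>G_Gamma E n\<^esub> g) = (\<lambda>i. - fst g i)"
proof -
  assume g: "g \<in> G_carrier E n"
  have "g \<otimes>\<^bsub>G_Gamma E n\<^esub> inv\<^bsub>G_Gamma E n\<^esub> g = \<one>\<^bsub>G_Gamma E n\<^esub>" using g grp.r_inv[of g] by simp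
  then have "fst (G_mult E n g (inv\<^bsub>G_Gamma E n\<^esub> g)) = (\<lambda>_. 0)" by simp
  then show ?thesis by (auto simp: fun_eq_iff eq_neg_iff_add_eq_0 add.commute)
qed

lemma fst_nat_pow: "g \<in> G_carrier E n \<Longrightarrow> fst (g [^]\<^bsub>G_Gamma E n\<^esub> (k::nat)) = (\<lambda>i. int k * fst g i)"
  by (induction k) (auto simp: algebra_simps)

lemma fst_int_pow: "g \<in> G_carrier E n \<Longrightarrow> fst (g [^]\<^bsub>G_Gamma E n\<^esub> (k::int)) = (\<lambda>i. k * fst g i)"
proof -
  assume g: "g \<in> G_carrier E n"
  have pc: "g [^]\<^bsub>G_Gamma E n\<^esub> (m::nat) \<in> G_carrier E n" for m
    using grp.nat_pow_closed[of g m] g by simp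
  show ?thesis
  proof (cases "k < 0")
    case True
    have e: "g [^]\<^bsub>G_Gamma E n\<^esub> k = inv\<^bsub>G_Gamma E n\<^esub> (g [^]\<^bsub>G_Gamma E n\<^esub> (nat (-k)))"
      by (subst int_pow_def2) (simp add: True)
    show ?thesis unfolding e fst_inv[OF pc] fst_nat_pow[OF g] using True by auto
  next
    case False
    have e: "g [^]\<^bsub>G_Gamma E n\<^esub> k = g [^]\<^bsub>G_Gamma E n\<^esub> (nat k)"
      by (subst int_pow_def2) (simp add: False)
    show ?thesis unfolding e fst_nat_pow[OF g] using False by auto
  qed
qed

lemma phi_closed: "\<phi> \<in> hom (G_Gamma E n) (G_Gamma E n) \<Longrightarrow> g \<in> G_carrier E n \<Longrightarrow> \<phi> g \<in> G_carrier E n"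
  using hom_in_carrier[of \<phi> "G_Gamma E n" "G_Gamma E n" g] by simp

lemma phi_mult: "\<phi> \<in> hom (G_Gamma E n) (G_Gamma E n) \<Longrightarrow> g \<in> G_carrier E n \<Longrightarrow> h \<in> G_carrier E n \<Longrightarrow>
   \<phi> (G_mult E n g h) = G_mult E n (\<phi> g) (\<phi> h)"
  using hom_mult[of \<phi> "G_Gamma E n" "G_Gamma E n" g h] by simp

lemma phi_inv: "\<phi> \<in> hom (G_Gamma E n) (G_Gamma E n) \<Longrightarrow> g \<in> G_carrier E n \<Longrightarrow>
   \<phi> (inv\<^bsub>G_Gamma E n\<^esub> g) = inv\<^bsub>G_Gamma E n\<^esub> (\<phi> g)"
  using group_hom.hom_inv[of "G_Gamma E n" "G_Gamma E n" \<phi> g]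
  by (simp add: group_hom_def group_hom_axioms_def grp.group_axioms)

lemma inv_closed': "g \<in> G_carrier E n \<Longrightarrow> inv\<^bsub>G_Gamma E n\<^esub> g \<in> G_carrier E n"
  using grp.inv_closed[of g] by simp

lemma mult_closed': "g \<in> G_carrier E n \<Longrightarrow> h \<in> G_carrier E n \<Longrightarrow> G_mult E n g h \<in> G_carrier E n"
  using grp.m_closed[of g h] by simp

lemma hom_fst_zero:
  assumes phi: "\<phi> \<in> hom (G_Gamma E n) (G_Gamma E n)"
    and g: "g \<in> G_carrier E n" and g0: "fst g = (\<lambda>_. 0)"
  shows "fst (\<phi> g) = (\<lambda>_. 0)"
proof -
  have gh: "group_hom (G_Gamma E n) (G_Gamma E n) \<phi>"
    using phi by (simp add: group_hom_def group_hom_axioms_def grp.group_axioms)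
  have comm: "fst (\<phi> (inv\<^bsub>G_Gamma E n\<^esub> (h \<otimes>\<^bsub>G_Gamma E n\<^esub> u) \<otimes>\<^bsub>G_Gamma E n\<^esub> (u \<otimes>\<^bsub>G_Gamma E n\<^esub> h))) = (\<lambda>_. 0)"
    if "h \<in> G_carrier E n" "u \<in> G_carrier E n" for h u
  proof -
    have c: "\<phi> h \<in> G_carrier E n" "\<phi> u \<in> G_carrier E n"
      using that phi phi_closed by auto
    show ?thesis using that c
      by (simp add: phi_mult[OF phi] phi_inv[OF phi] mult_closed' inv_closed' fst_inv fun_eq_iff)
  qed
  have main: "\<forall>g \<in> G_carrier E n. fst g = (\<lambda>_. 0) \<longrightarrow> (\<forall>q. q \<notin> S \<longrightarrow> snd g q = 0) \<longrightarrow> fst (\<phi> g) = (\<lambda>_. 0)"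
    if "finite S" for S
    using that
  proof (induction S rule: finite_induct)
    case empty
    show ?case
    proof (intro ballI impI)
      fix g assume "g \<in> G_carrier E n" "fst g = (\<lambda>_. 0)" "\<forall>q. q \<notin> {} \<longrightarrow> snd g q = 0"
      then have "g = \<one>\<^bsub>G_Gamma E n\<^esub>" by (simp add: prod_eq_iff fun_eq_iff)
      then show "fst (\<phi> g) = (\<lambda>_. 0)" using group_hom.hom_one[OF gh] by simp
    qed
  next
    case (insert p S)
    show ?case
    proof (intro ballI impI)
      fix g assume g: "g \<in> G_carrier E n" and g0: "fst g = (\<lambda>_. 0)"
        and gs: "\<forall>q. q \<notin> insert p S \<longrightarrow> snd g q = 0"
      show "fst (\<phi> g) = (\<lambda>_. 0)"
      proof (cases "p \<in> nonedge E n")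
        case False
        then have "snd g p = 0" using g by (rule carrier_snd[rotated])
        then have "\<forall>q. q \<notin> S \<longrightarrow> snd g q = 0" using gs by auto
        then show ?thesis using insert.IH g g0 by blast
      next
        case True
        obtain k j where p: "p = (k,j)" by fastforce
        have kj: "1 \<le> k" "k < j" "j \<le> n" "\<not> E k j" using True p by (auto simp: nonedge_def)
        define c where "c = snd g p"
        define g' where "g' = ((\<lambda>_::nat. 0::int), (snd g)(p := 0))"
        define w where "w = ((\<lambda>_::nat. 0::int), (\<lambda>q::nat\<times>nat. if q = p then c else 0))"
        define u where "u = ((\<lambda>i::nat. if i = j then c else 0), (\<lambda>_::nat\<times>nat. 0::int))"
        define h where "h = ((\<lambda>i::nat. if i = k then 1::int else 0), (\<lambda>_::nat\<times>nat. 0::int))"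
        have g'c: "g' \<in> G_carrier E n" using g by (auto simp: G_carrier_def g'_def)
        have wc: "w \<in> G_carrier E n" using True by (auto simp: G_carrier_def w_def)
        have uc: "u \<in> G_carrier E n" using kj by (auto simp: G_carrier_def u_def)
        have hc: "h \<in> G_carrier E n" using kj by (auto simp: G_carrier_def h_def)
        have gw: "g = G_mult E n g' w" using g0
          by (auto simp: G_mult_def g'_def w_def c_def prod_eq_iff fun_eq_iff)
        have uh: "G_mult E n u h = G_mult E n (G_mult E n h u) w"
          using True kj p by (auto simp: G_mult_def w_def u_def h_def prod_eq_iff fun_eq_iff nonedge_def)
        have "w = inv\<^bsub>G_Gamma E n\<^esub> (h \<otimes>\<^bsub>G_Gamma E n\<^esub> u) \<otimes>\<^bsub>G_Gamma E n\<^esub> (u \<otimes>\<^bsub>G_Gamma E n\<^esub> h)"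
        proof -
          have hu: "G_mult E n h u \<in> G_carrier E n" using hc uc by (rule mult_closed')
          have "inv\<^bsub>G_Gamma E n\<^esub> (G_mult E n h u) \<otimes>\<^bsub>G_Gamma E n\<^esub> (G_mult E n h u \<otimes>\<^bsub>G_Gamma E n\<^esub> w) = w"
            using grp.m_assoc[of "inv\<^bsub>G_Gamma E n\<^esub> (G_mult E n h u)" "G_mult E n h u" w, symmetric]
              grp.l_inv[of "G_mult E n h u"] grp.l_one[of w] hu wc inv_closed'[OF hu] by simp
          then show ?thesis using uh by simp
        qed
        then have fw: "fst (\<phi> w) = (\<lambda>_. 0)" using comm[OF hc uc] by simp
        have "\<forall>q. q \<notin> S \<longrightarrow> snd g' q = 0" using gs by (auto simp: g'_def p)
        then have fg': "fst (\<phi> g') = (\<lambda>_. 0)" using insert.IH g'c by (simp add: g'_def)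
        have "\<phi> g = G_mult E n (\<phi> g') (\<phi> w)"
          using gw group_hom.hom_mult[OF gh, of g' w] g'c wc by simp
        then show ?thesis using fw fg' by simp
      qed
    qed
  qed
  show ?thesis using main[OF finite_nonedge[of E n]] g g0 by (auto simp: G_carrier_def)
qed


lemma fst_dep:
  assumes phi: "\<phi> \<in> hom (G_Gamma E n) (G_Gamma E n)"
    and g: "g \<in> G_carrier E n" and g': "g' \<in> G_carrier E n" and eq: "fst g = fst g'"
  shows "fst (\<phi> g') = fst (\<phi> g)"
proof -
  define w where "w = G_mult E n (inv\<^bsub>G_Gamma E n\<^esub> g) g'"
  have wc: "w \<in> G_carrier E n" using g g' by (simp add: w_def mult_closed' inv_closed')
  have w0: "fst w = (\<lambda>_. 0)" using g eq by (simp add: w_def fst_inv)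
  have "g \<otimes>\<^bsub>G_Gamma E n\<^esub> (inv\<^bsub>G_Gamma E n\<^esub> g \<otimes>\<^bsub>G_Gamma E n\<^esub> g') = g'"
    using grp.m_assoc[of g "inv\<^bsub>G_Gamma E n\<^esub> g" g', symmetric] grp.r_inv[of g] grp.l_one[of g'] g g' inv_closed'[OF g]
    by simp
  then have "g' = G_mult E n g w" by (simp add: w_def)
  then have "\<phi> g' = G_mult E n (\<phi> g) (\<phi> w)" using phi_mult[OF phi g wc] by simp
  then show ?thesis using hom_fst_zero[OF phi wc w0] by simp
qed

lemma phi_lin:
  assumes phi: "\<phi> \<in> hom (G_Gamma E n) (G_Gamma E n)"
    and h: "h \<in> G_carrier E n"
  shows "fst (\<phi> h) = (\<lambda>m. \<Sum>i\<in>{1..n}. fst h i * fst (\<phi> (xg i)) m)"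
proof -
  have main: "\<forall>h\<in>G_carrier E n. (\<forall>i. i \<notin> S \<longrightarrow> fst h i = 0) \<longrightarrow>
      fst (\<phi> h) = (\<lambda>m. \<Sum>i\<in>S. fst h i * fst (\<phi> (xg i)) m)"
    if "finite S" "S \<subseteq> {1..n}" for S
    using that
  proof (induction S rule: finite_subset_induct)
    case empty
    show ?case
    proof (intro ballI impI)
      fix h assume "h \<in> G_carrier E n" "\<forall>i. i \<notin> {} \<longrightarrow> fst h i = 0"
      then show "fst (\<phi> h) = (\<lambda>m. \<Sum>i\<in>{}. fst h i * fst (\<phi> (xg i)) m)"
        using hom_fst_zero[OF phi] by (simp add: fun_eq_iff)
    qed
  next
    case (insert j S)
    show ?case
    proof (intro ballI impI)
      fix h assume h: "h \<in> G_carrier E n" and hs: "\<forall>i. i \<notin> insert j S \<longrightarrow> fst h i = 0"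
      define c where "c = fst h j"
      have xj: "xg j \<in> G_carrier E n" using insert.hyps by (intro xg_in) auto
      define p where "p = xg j [^]\<^bsub>G_Gamma E n\<^esub> c"
      have pc: "p \<in> G_carrier E n" using grp.int_pow_closed[of "xg j" c] xj by (simp add: p_def)
      define h' where "h' = G_mult E n h (inv\<^bsub>G_Gamma E n\<^esub> p)"
      have h'c: "h' \<in> G_carrier E n" using h pc by (simp add: h'_def mult_closed' inv_closed')
      have fp: "fst p = (\<lambda>i. c * fst (xg j) i)" using fst_int_pow[OF xj] by (simp add: p_def)
      have fh': "fst h' i = fst h i - c * fst (xg j) i" for i
        using pc by (simp add: h'_def fst_inv fp)
      have h'S: "\<forall>i. i \<notin> S \<longrightarrow> fst h' i = 0" using hs by (auto simp: fh' xg_def c_def)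
      have "h' \<otimes>\<^bsub>G_Gamma E n\<^esub> p = h"
        using grp.m_assoc[of h "inv\<^bsub>G_Gamma E n\<^esub> p" p] grp.l_inv[of p] grp.r_one[of h] h pc inv_closed'[OF pc]
        by (simp add: h'_def)
      then have "\<phi> h = G_mult E n (\<phi> h') (\<phi> p)" using phi_mult[OF phi h'c pc] by simp
      moreover have "fst (\<phi> p) = (\<lambda>m. c * fst (\<phi> (xg j)) m)"
      proof -
        have "\<phi> p = \<phi> (xg j) [^]\<^bsub>G_Gamma E n\<^esub> c"
          using hom_int_pow[OF phi _ grp.group_axioms grp.group_axioms, of "xg j" c] xj by (simp add: p_def)
        then show ?thesis using fst_int_pow[OF phi_closed[OF phi xj]] by simp
      qed
      moreover have "fst (\<phi> h') = (\<lambda>m. \<Sum>i\<in>S. fst h i * fst (\<phi> (xg i)) m)"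
      proof -
        have "fst (\<phi> h') = (\<lambda>m. \<Sum>i\<in>S. fst h' i * fst (\<phi> (xg i)) m)" using insert.IH h'c h'S by blast
        moreover have "fst h' i = fst h i" if "i \<in> S" for i
          using that insert.hyps by (auto simp: fh' xg_def)
        ultimately show ?thesis by (auto intro!: sum.cong)
      qed
      ultimately show "fst (\<phi> h) = (\<lambda>m. \<Sum>i\<in>insert j S. fst h i * fst (\<phi> (xg i)) m)"
        using insert.hyps by (simp add: c_def fun_eq_iff)
    qed
  qed
  have "\<forall>i. i \<notin> {1..n} \<longrightarrow> fst h i = 0" using h carrier_fst by blast
  then show ?thesis using main[of "{1..n}"] h by simp
qed

end

definition sc :: "real \<Rightarrow> (nat \<Rightarrow> real) \<Rightarrow> (nat \<Rightarrow> real)" where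
  "sc c f = (\<lambda>i. c * f i)"

interpretation rv: vector_space sc
  by unfold_locales (auto simp: sc_def algebra_simps)

definition Rv :: "((nat \<Rightarrow> int) \<times> (nat \<times> nat \<Rightarrow> int)) \<Rightarrow> nat \<Rightarrow> real" where
  "Rv h = (\<lambda>i. real_of_int (fst h i))"

definition ev :: "nat \<Rightarrow> nat \<Rightarrow> real" where
  "ev k = (\<lambda>m. if m = k then 1 else 0)"

definition Cent where
  "Cent E n g = {h \<in> G_carrier E n. G_mult E n g h = G_mult E n h g}"

definition small where
  "small E n d g = (\<exists>T. finite T \<and> card T \<le> d \<and> Rv ` Cent E n g \<subseteq> rv.span T)"

lemma commute_iff:
  "G_mult E n g h = G_mult E n h g \<longleftrightarrow>
     (\<forall>k j. (k,j) \<in> nonedge E n \<longrightarrow> fst g j * fst h k = fst h j * fst g k)"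
proof
  assume a: "G_mult E n g h = G_mult E n h g"
  show "\<forall>k j. (k,j) \<in> nonedge E n \<longrightarrow> fst g j * fst h k = fst h j * fst g k"
  proof (intro allI impI)
    fix k j assume kj: "(k,j) \<in> nonedge E n"
    have "snd (G_mult E n g h) (k,j) = snd (G_mult E n h g) (k,j)" using a by simp
    then show "fst g j * fst h k = fst h j * fst g k" using kj by (simp add: snd_mult)
  qed
next
  assume a: "\<forall>k j. (k,j) \<in> nonedge E n \<longrightarrow> fst g j * fst h k = fst h j * fst g k"
  show "G_mult E n g h = G_mult E n h g"
  proof (rule prod_eqI)
    show "fst (G_mult E n g h) = fst (G_mult E n h g)" by (simp add: add.commute)
    show "snd (G_mult E n g h) = snd (G_mult E n h g)"
    proof
      fix q :: "nat \<times> nat"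
      obtain k j where q: "q = (k,j)" by fastforce
      show "snd (G_mult E n g h) q = snd (G_mult E n h g) q"
        using a by (simp add: q snd_mult)
    qed
  qed
qed

lemma small_upper:
  assumes sym: "\<forall>i j. E i j \<longrightarrow> E j i"
    and g: "g \<in> G_carrier E n" and gi: "fst g i \<noteq> 0" and deg: "vdeg E n i < d"
  shows "small E n d g"
proof -
  have i: "i \<in> {1..n}" using carrier_fst[OF g] gi by blast
  define N where "N = {j \<in> {1..n}. E i j}"
  define T where "T = insert (Rv g) (ev ` N)"
  have fN: "finite N" by (simp add: N_def)
  have fT: "finite T" using fN by (simp add: T_def)
  have "card T \<le> Suc (card (ev ` N))" unfolding T_def by (rule card_insert_le_m1) (auto simp: fN)
  also have "card (ev ` N) \<le> card N" by (rule card_image_le[OF fN])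
  finally have cT: "card T \<le> d" using deg by (simp add: vdeg_def N_def)
  have "Rv h \<in> rv.span T" if h: "h \<in> Cent E n g" for h
  proof -
    define a where "a = fst g"
    define b where "b = fst h"
    have hc: "h \<in> G_carrier E n" using h by (simp add: Cent_def)
    have comm: "\<forall>k j. (k,j) \<in> nonedge E n \<longrightarrow> a j * b k = b j * a k"
      using h by (simp add: Cent_def commute_iff a_def b_def)
    define v where "v = sc (1 / real_of_int (a i)) (sc (real_of_int (b i)) (Rv g) +
        (\<Sum>k\<in>N. sc (real_of_int (a i * b k - a k * b i)) (ev k)))"
    have "v \<in> rv.span T"
      unfolding v_def
      by (intro rv.span_scale rv.span_add rv.span_sum) (auto simp: T_def intro: rv.span_base)
    moreover have "Rv h = v"
    proof
      fix m
      have sum_eq: "(\<Sum>k\<in>N. sc (real_of_int (a i * b k - a k * b i)) (ev k)) m =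
          (if m \<in> N then real_of_int (a i * b m - a m * b i) else 0)"
        by (simp add: sum_fun_apply sc_def ev_def if_distrib[of "\<lambda>x. _ * x"] fN sum.delta sum.delta' cong: if_cong)
      have ai: "real_of_int (a i) \<noteq> 0" using gi by (simp add: a_def)
      have key: "real_of_int (b m) = (real_of_int (b i) * real_of_int (a m) +
            (if m \<in> N then real_of_int (a i * b m - a m * b i) else 0)) / real_of_int (a i)"
      proof (cases "m \<in> N")
        case True
        then show ?thesis using ai by (simp add: field_simps)
      next
        case False
        have "a i * b m = b i * a m"
        proof (cases "m \<in> {1..n}")
          case False
          then show ?thesis using carrier_fst[OF g, of m] carrier_fst[OF hc, of m] by (simp add: a_def b_def)
        next
          case mn: True
          show ?thesis
          proof (cases "m = i")
            case True then show ?thesis by simp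
          next
            case mi: False
            have nE: "\<not> E i m" using False mn by (simp add: N_def)
            show ?thesis
            proof (cases "i < m")
              case True
              then have "(i,m) \<in> nonedge E n" using nE mn i by (auto simp: nonedge_def)
              then show ?thesis using comm by (auto simp: mult.commute)
            next
              case False
              then have "m < i" using mi by simp
              moreover have "\<not> E m i" using nE sym by blast
              ultimately have "(m,i) \<in> nonedge E n" using mn i by (auto simp: nonedge_def)
              then show ?thesis using comm by (auto simp: mult.commute)
            qed
          qed
        qed
        then have "real_of_int (a i) * real_of_int (b m) = real_of_int (b i) * real_of_int (a m)"
          by (metis of_int_mult)
        then show ?thesis using False ai by (simp add: field_simps)
      qed
      show "Rv h m = v m"
        unfolding v_def using key sum_eq
        by (simp add: sc_def Rv_def a_def b_def)
    qed
    ultimately show ?thesis by simp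
  qed
  then show ?thesis unfolding small_def using fT cT by blast
qed


lemma Rv_xg: "Rv (xg m) = ev m"
  by (auto simp: Rv_def xg_def ev_def)

lemma ev_inj: "inj ev"
proof (rule injI)
  fix x y assume "ev x = ev y"
  then have "ev x x = ev y x" by simp
  then show "x = y" by (simp add: ev_def split: if_splits)
qed

lemma small_lower:
  assumes sym: "\<forall>i j. E i j \<longrightarrow> E j i" and irr: "\<forall>i. \<not> E i i"
    and i: "i \<in> V_d E n d"
  shows "\<not> small E n d (xg i)"
proof
  assume sm: "small E n d (xg i)"
  then obtain T where fT: "finite T" and cT: "card T \<le> d" and sub: "Rv ` Cent E n (xg i) \<subseteq> rv.span T"
    unfolding small_def by blast
  have i1: "i \<in> {1..n}" and di: "d \<le> vdeg E n i" using i by (auto simp: V_d_def)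
  define N where "N = {j \<in> {1..n}. E i j}"
  define M where "M = insert i N"
  define B where "B = ev ` M"
  have fM: "finite M" by (simp add: M_def N_def)
  have iN: "i \<notin> N" using irr by (simp add: N_def)
  have cB: "card B = Suc (vdeg E n i)"
    unfolding B_def card_image[OF inj_on_subset[OF ev_inj subset_UNIV]] M_def
    using iN by (simp add: N_def vdeg_def)
  have BC: "B \<subseteq> Rv ` Cent E n (xg i)"
  proof
    fix v assume "v \<in> B"
    then obtain m where m: "m \<in> M" and v: "v = ev m" by (auto simp: B_def)
    have m1: "m \<in> {1..n}" using m i1 by (auto simp: M_def N_def)
    have "xg m \<in> Cent E n (xg i)"
      unfolding Cent_def
    proof (intro CollectI conjI)
      show "xg m \<in> G_carrier E n" using m1 by (rule xg_in)
      show "G_mult E n (xg i) (xg m) = G_mult E n (xg m) (xg i)"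
        unfolding commute_iff
      proof (intro allI impI)
        fix k j assume kj: "(k,j) \<in> nonedge E n"
        show "fst (xg i) j * fst (xg m) k = fst (xg m) j * fst (xg i) k"
        proof (cases "m = i")
          case True then show ?thesis by (simp add: mult.commute)
        next
          case False
          then have Eim: "E i m" "E m i" using m sym by (auto simp: M_def N_def)
          have "\<not> (j = i \<and> k = m)" using kj Eim by (auto simp: nonedge_def)
          moreover have "\<not> (j = m \<and> k = i)" using kj Eim by (auto simp: nonedge_def)
          ultimately show ?thesis by (auto simp: xg_def)
        qed
      qed
    qed
    then show "v \<in> Rv ` Cent E n (xg i)" using Rv_xg v by (metis image_eqI)
  qed
  have indB: "rv.independent B"
    unfolding rv.independent_explicit_finite_subsets
  proof (intro allI impI ballI)
    fix S u v assume SB: "S \<subseteq> B" and fS: "finite S" and su: "(\<Sum>v\<in>S. sc (u v) v) = 0" and vS: "v \<in> S"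
    obtain m0 where v: "v = ev m0" using vS SB by (auto simp: B_def)
    have "(\<Sum>v\<in>S. sc (u v) v) m0 = 0" using su by simp
    then have s0: "(\<Sum>w\<in>S. u w * w m0) = 0" by (simp add: sum_fun_apply sc_def)
    have wm: "w m0 = (if w = v then 1 else 0)" if wS: "w \<in> S" for w
    proof -
      obtain m' where w: "w = ev m'" using wS SB unfolding B_def by blast
      show ?thesis
      proof (cases "m' = m0")
        case True then show ?thesis by (simp add: w v ev_def)
      next
        case False
        have ne: "ev m' \<noteq> ev m0" using ev_inj False by (auto simp: inj_eq)
        have z: "ev m' m0 = 0" using False by (simp add: ev_def)
        show ?thesis using z ne by (simp add: w v)
      qed
    qed
    have seq: "(\<Sum>w\<in>S. u w * w m0) = (\<Sum>w\<in>S. u w * (if w = v then 1 else 0))"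
    proof (rule sum.cong[OF refl])
      fix w assume wS': "w \<in> S"
      show "u w * w m0 = u w * (if w = v then 1 else 0)" by (subst wm[OF wS']) (rule refl)
    qed
    have "(\<Sum>w\<in>S. u w * (if w = v then 1 else 0)) = 0"
      using s0 seq by (simp only:)
    then show "u v = 0" using vS fS by (simp add: if_distrib[of "\<lambda>x. _ * x"] sum.delta cong: if_cong)
  qed
  have "finite B \<and> card B \<le> card T"
    using rv.independent_span_bound[OF fT indB] BC sub by blast
  then show False using cB cT di by simp
qed

lemma small_inv:
  assumes phi: "\<phi> \<in> iso (G_Gamma E n) (G_Gamma E n)"
    and g: "g \<in> G_carrier E n" and sm: "small E n d (\<phi> g)"
  shows "small E n d g"
proof -
  interpret grp: group "G_Gamma E n" by (rule G_group)
  define \<psi> where "\<psi> = inv_into (G_carrier E n) \<phi>"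
  have psi: "\<psi> \<in> iso (G_Gamma E n) (G_Gamma E n)" using grp.iso_set_sym[OF phi] by (simp add: \<psi>_def)
  have phom: "\<phi> \<in> hom (G_Gamma E n) (G_Gamma E n)" using phi by (simp add: iso_def)
  have qhom: "\<psi> \<in> hom (G_Gamma E n) (G_Gamma E n)" using psi by (simp add: iso_def)
  have inj: "inj_on \<phi> (G_carrier E n)" using phi by (simp add: iso_def bij_betw_def)
  obtain T where fT: "finite T" and cT: "card T \<le> d" and sub: "Rv ` Cent E n (\<phi> g) \<subseteq> rv.span T"
    using sm unfolding small_def by blast
  define L where "L = (\<lambda>v::nat\<Rightarrow>real. (\<lambda>m. \<Sum>i\<in>{1..n}. v i * Rv (\<psi> (xg i)) m))"
  have lin: "Vector_Spaces.linear sc sc L"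
    unfolding Vector_Spaces.linear_iff
  proof (intro conjI allI)
    show "vector_space sc" by (rule rv.vector_space_axioms)
    show "vector_space sc" by (rule rv.vector_space_axioms)
    fix x y :: "nat \<Rightarrow> real"
    show "L (x + y) = L x + L y"
      by (simp add: L_def fun_eq_iff distrib_right sum.distrib)
  next
    fix c :: real and x :: "nat \<Rightarrow> real"
    show "L (sc c x) = sc c (L x)"
      by (simp add: L_def sc_def fun_eq_iff sum_distrib_left mult.assoc)
  qed
  have mh: "module_hom sc sc L" using lin by (simp add: module_hom_iff_linear)
  have "Rv ` Cent E n g \<subseteq> rv.span (L ` T)"
  proof
    fix r assume "r \<in> Rv ` Cent E n g"
    then obtain h where h: "h \<in> Cent E n g" and r: "r = Rv h" by blast
    have hc: "h \<in> G_carrier E n" and hg: "G_mult E n g h = G_mult E n h g" using h by (auto simp: Cent_def)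
    have "\<phi> h \<in> Cent E n (\<phi> g)"
      using hc hg g phi_closed[OF phom hc] phi_mult[OF phom g hc] phi_mult[OF phom hc g]
      by (simp add: Cent_def)
    then have inspan: "Rv (\<phi> h) \<in> rv.span T" using sub by blast
    have hh: "\<psi> (\<phi> h) = h" using inv_into_f_f[OF inj hc] by (simp add: \<psi>_def)
    have "fst (\<psi> (\<phi> h)) = (\<lambda>m. \<Sum>i\<in>{1..n}. fst (\<phi> h) i * fst (\<psi> (xg i)) m)"
      by (rule phi_lin[OF qhom phi_closed[OF phom hc]])
    then have fh: "fst h = (\<lambda>m. \<Sum>i\<in>{1..n}. fst (\<phi> h) i * fst (\<psi> (xg i)) m)"
      unfolding hh .
    have "Rv h = L (Rv (\<phi> h))"
    proof
      fix m
      have "fst h m = (\<Sum>i\<in>{1..n}. fst (\<phi> h) i * fst (\<psi> (xg i)) m)" using fh by simp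
      then have "real_of_int (fst h m) = (\<Sum>i\<in>{1..n}. real_of_int (fst (\<phi> h) i) * real_of_int (fst (\<psi> (xg i)) m))"
        by simp
      then show "Rv h m = L (Rv (\<phi> h)) m" unfolding Rv_def L_def by simp
    qed
    then have "r \<in> L ` rv.span T" using inspan r by blast
    then show "r \<in> rv.span (L ` T)" using module_hom.span_image[OF mh, of T] by simp
  qed
  moreover have "finite (L ` T)" using fT by simp
  moreover have "card (L ` T) \<le> d" using card_image_le[OF fT, of L] cT by simp
  ultimately show ?thesis unfolding small_def by blast
qed

theorem theorem4p3:
  fixes E :: "nat \<Rightarrow> nat \<Rightarrow> bool" and n d :: nat
  assumes "\<forall>i j. E i j \<longrightarrow> E j i"
    and "\<forall>i. \<not> E i i"
    and "1 \<le> d" and "d \<le> n - 1"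
  shows "subgroup (H_d E n d) (G_Gamma E n) \<and>
         (\<forall>\<phi> \<in> iso (G_Gamma E n) (G_Gamma E n). \<phi> ` H_d E n d = H_d E n d)"
proof -
  interpret grp: group "G_Gamma E n" by (rule G_group)
  have keep: "\<phi> ` H_d E n d \<subseteq> H_d E n d" if phi: "\<phi> \<in> iso (G_Gamma E n) (G_Gamma E n)" for \<phi>
  proof
    fix y assume "y \<in> \<phi> ` H_d E n d"
    then obtain h where h: "h \<in> H_d E n d" and y: "y = \<phi> h" by blast
    have phom: "\<phi> \<in> hom (G_Gamma E n) (G_Gamma E n)" using phi by (simp add: iso_def)
    have hc: "h \<in> G_carrier E n" and hv: "\<forall>i. i \<notin> V_d E n d \<longrightarrow> fst h i = 0"
      using h by (auto simp: H_d_def)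
    have yc: "y \<in> G_carrier E n" using phi_closed[OF phom hc] y by simp
    have "fst y m = 0" if m: "m \<notin> V_d E n d" for m
    proof -
      have "fst h i * fst (\<phi> (xg i)) m = 0" if i: "i \<in> {1..n}" for i
      proof (cases "i \<in> V_d E n d")
        case False then show ?thesis using hv by simp
      next
        case True
        have xc: "xg i \<in> G_carrier E n" using i by (rule xg_in)
        have "fst (\<phi> (xg i)) m = 0"
        proof (rule ccontr)
          assume nz: "fst (\<phi> (xg i)) m \<noteq> 0"
          have pc: "\<phi> (xg i) \<in> G_carrier E n" by (rule phi_closed[OF phom xc])
          have "m \<in> {1..n}" using carrier_fst[OF pc] nz by blast
          then have "vdeg E n m < d" using m by (auto simp: V_d_def)
          then have "small E n d (\<phi> (xg i))" using small_upper[OF assms(1) pc nz] by blast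
          then have "small E n d (xg i)" by (rule small_inv[OF phi xc])
          then show False using small_lower[OF assms(1,2) True] by blast
        qed
        then show ?thesis by simp
      qed
      then have "(\<Sum>i\<in>{1..n}. fst h i * fst (\<phi> (xg i)) m) = 0" by (intro sum.neutral) blast
      then show ?thesis using phi_lin[OF phom hc] y by simp
    qed
    then show "y \<in> H_d E n d" using yc by (simp add: H_d_def)
  qed
  have "\<phi> ` H_d E n d = H_d E n d" if phi: "\<phi> \<in> iso (G_Gamma E n) (G_Gamma E n)" for \<phi>
  proof
    show "\<phi> ` H_d E n d \<subseteq> H_d E n d" by (rule keep[OF phi])
    show "H_d E n d \<subseteq> \<phi> ` H_d E n d"
    proof
      fix h assume h: "h \<in> H_d E n d"
      define \<psi> where "\<psi> = inv_into (G_carrier E n) \<phi>"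
      have psi: "\<psi> \<in> iso (G_Gamma E n) (G_Gamma E n)" using grp.iso_set_sym[OF phi] by (simp add: \<psi>_def)
      have "\<psi> h \<in> H_d E n d" using keep[OF psi] h by blast
      moreover have "\<phi> (\<psi> h) = h"
      proof -
        have "\<phi> ` G_carrier E n = G_carrier E n" using phi by (simp add: iso_def bij_betw_def)
        moreover have "h \<in> G_carrier E n" using h by (simp add: H_d_def)
        ultimately show ?thesis unfolding \<psi>_def by (metis f_inv_into_f)
      qed
      ultimately show "h \<in> \<phi> ` H_d E n d" by (metis image_eqI)
    qed
  qed
  moreover have "subgroup (H_d E n d) (G_Gamma E n)"
  proof
    show "H_d E n d \<subseteq> carrier (G_Gamma E n)" by (auto simp: H_d_def)
    show "\<one>\<^bsub>G_Gamma E n\<^esub> \<in> H_d E n d" by (simp add: H_d_def G_carrier_def)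
    fix x y assume x: "x \<in> H_d E n d" and y: "y \<in> H_d E n d"
    then show "x \<otimes>\<^bsub>G_Gamma E n\<^esub> y \<in> H_d E n d"
      by (auto simp: H_d_def mult_closed')
  next
    fix x assume x: "x \<in> H_d E n d"
    then show "inv\<^bsub>G_Gamma E n\<^esub> x \<in> H_d E n d"
      by (auto simp: H_d_def inv_closed' fst_inv)
  qed
  ultimately show ?thesis by blast
qed

end
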